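(* Let $m\ge 2$ and let $C_1,\dots,C_m\subset\mathbb{R}^n$ be nonempty, closed, convex sets; put $C=C_1\times\cdots\times C_m$ and, for $a=(a_1,\dots,a_m)\in C$, $D(a)=\sum_{i=1}^m\|a_i-a_{i+1}\|$ with $a_{m+1}=a_1$. Suppose that either (i) all the sets $C_1,\dots,C_m$ are bounded, or (ii) for every index $j\in\{1,\dots,m\}$ such that $C_j$ is unbounded, and for every sequence $(a_j^{(k)})_{k}\subset C_j$ with $\|a_j^{(k)}\|\to\infty$, at least one of $d_{C_{j-1}}(a_j^{(k)})\to\infty$ or $d_{C_{j+1}}(a_j^{(k)})\to\infty$ holds as $k\to\infty$ (indices taken cyclically, $C_0=C_m$, $C_{m+1}=C_1$). Then the problem $\min_{a\in C} D(a)$ admits an optimal solution, i.e. there is $a^*\in C$ with $D(a^* )=\inf_{a\in C}D(a)$.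
   Context: $\|\cdot\|$ is the Euclidean norm on $\mathbb{R}^n$. For a nonempty set $K\subset\mathbb{R}^n$, $d_K(x)=\inf_{y\in K}\|x-y\|$ is the distance function of $K$. The problem $\min_{a\in C}D(a)$ is called the generalized waist problem for the ordered family $(C_1,\dots,C_m)$. *)

theory Defs
  imports "HOL-Analysis.Analysis"
begin

definition cyc_len :: "nat \<Rightarrow> (nat \<Rightarrow> 'a::real_normed_vector) \<Rightarrow> real" where
  "cyc_len m a = (\<Sum>i<m. norm (a i - a ((i + 1) mod m)))"

definition prod_sets :: "nat \<Rightarrow> (nat \<Rightarrow> 'a set) \<Rightarrow> (nat \<Rightarrow> 'a) set" where
  "prod_sets m C = {a. \<forall>i<m. a i \<in> C i}"

end

theory Submission
  imports Defs
begin

lemma coord_cont[continuous_intros]: "continuous_on S (\<lambda>a::nat \<Rightarrow> 'b::topological_space. a i)"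
  by (rule continuous_on_subset[OF continuous_on_product_coordinates]) simp

lemma term_le_cyc:
  fixes a :: "nat \<Rightarrow> 'a::real_normed_vector"
  assumes "i < m"
  shows "norm (a i - a ((i + 1) mod m)) \<le> cyc_len m a"
  unfolding cyc_len_def
  by (rule member_le_sum[where f="\<lambda>i. norm (a i - a ((i + 1) mod m))"]) (use assms in auto)

lemma cyc_len_nonneg: "0 \<le> cyc_len m (a :: nat \<Rightarrow> 'a::real_normed_vector)"
  unfolding cyc_len_def by (simp add: sum_nonneg)

lemma cyc_len_cong:
  assumes "m > 0" "\<And>i. i < m \<Longrightarrow> a i = b i"
  shows "cyc_len m a = cyc_len m b"
  unfolding cyc_len_def
  by (rule sum.cong) (use assms in auto)

lemma not_tendsto_bounded:
  fixes g :: "nat \<Rightarrow> real"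
  assumes "\<And>k. g k \<le> M"
  shows "\<not> filterlim g at_top sequentially"
proof
  assume "filterlim g at_top sequentially"
  then have "eventually (\<lambda>k. M + 1 \<le> g k) sequentially"
    by (simp add: filterlim_at_top)
  then have "eventually (\<lambda>k. False) sequentially"
  proof eventually_elim
    case (elim k)
    then show ?case using assms[of k] by linarith
  qed
  then show False by simp
qed

theorem mainTheorem1:
  fixes m :: nat and C :: "nat \<Rightarrow> 'a::euclidean_space set"
  assumes "m \<ge> 2"
    and "\<And>i. i < m \<Longrightarrow> C i \<noteq> {}"
    and "\<And>i. i < m \<Longrightarrow> closed (C i)"
    and "\<And>i. i < m \<Longrightarrow> convex (C i)"
    and "(\<forall>i<m. bounded (C i)) \<or>
         (\<forall>j<m. \<not> bounded (C j) \<longrightarrow>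
            (\<forall>x :: nat \<Rightarrow> 'a. (\<forall>k. x k \<in> C j) \<longrightarrow>
               filterlim (\<lambda>k. norm (x k)) at_top sequentially \<longrightarrow>
               filterlim (\<lambda>k. infdist (x k) (C ((j + m - 1) mod m))) at_top sequentially \<or>
               filterlim (\<lambda>k. infdist (x k) (C ((j + 1) mod m))) at_top sequentially))"
  shows "\<exists>a\<in>prod_sets m C. cyc_len m a = (INF b\<in>prod_sets m C. cyc_len m b)"
proof -
  let ?P = "prod_sets m C"
  let ?D = "cyc_len m"
  have m0: "m > 0" using assms(1) by simp
  define a0 where "a0 = (\<lambda>i. SOME x. x \<in> C i)"
  have a0P: "a0 \<in> ?P"
    unfolding prod_sets_def a0_def using assms(2) by (auto simp: some_in_eq)
  define M where "M = ?D a0"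
  have bnd: "\<exists>R. \<forall>a\<in>?P. ?D a \<le> M \<longrightarrow> norm (a j) \<le> R" if j: "j < m" for j
  proof (rule ccontr)
    assume nex: "\<not> (\<exists>R. \<forall>a\<in>?P. ?D a \<le> M \<longrightarrow> norm (a j) \<le> R)"
    have "\<exists>a. a \<in> ?P \<and> ?D a \<le> M \<and> real k < norm (a j)" for k :: nat
    proof -
      from nex have "\<not> (\<forall>a\<in>?P. ?D a \<le> M \<longrightarrow> norm (a j) \<le> real k)" by blast
      then show ?thesis by (auto simp: not_le)
    qed
    then have "\<forall>k::nat. \<exists>a. a \<in> ?P \<and> ?D a \<le> M \<and> real k < norm (a j)" by blast
    from choice[OF this] obtain f where f0: "\<forall>k. f k \<in> ?P \<and> ?D (f k) \<le> M \<and> real k < norm (f k j)"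
      by blast
    have f: "\<And>k. f k \<in> ?P" "\<And>k. ?D (f k) \<le> M" "\<And>k. real k < norm (f k j)"
      using f0 by auto
    define x where "x k = f k j" for k
    have xC: "\<forall>k. x k \<in> C j" using f(1) j unfolding x_def prod_sets_def by auto
    have "real k \<le> norm (x k)" for k unfolding x_def using f(3)[of k] by linarith
    then have ev: "eventually (\<lambda>k. real k \<le> norm (x k)) sequentially"
      by (intro always_eventually allI)
    have lim: "filterlim (\<lambda>k. norm (x k)) at_top sequentially"
      by (rule filterlim_at_top_mono[OF filterlim_real_sequentially ev])
    have unb: "\<not> bounded (C j)"
    proof
      assume "bounded (C j)"
      then obtain B where "\<forall>y\<in>C j. norm y \<le> B" by (auto simp: bounded_iff)
      with xC have "\<And>k. norm (x k) \<le> B" by auto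
      then show False using not_tendsto_bounded[of "\<lambda>k. norm (x k)" B] lim by blast
    qed
    have nb: "\<not> (\<forall>i<m. bounded (C i))" using unb j by blast
    have jp: "(j + 1) mod m < m" using m0 by simp
    have jm: "(j + m - 1) mod m < m" using m0 by simp
    have jm2: "((j + m - 1) mod m + 1) mod m = j"
    proof -
      have "((j + m - 1) mod m + 1) mod m = (j + m - 1 + 1) mod m" by (simp add: mod_Suc_eq)
      also have "\<dots> = (j + m) mod m" using m0 by simp
      also have "\<dots> = j" using j by simp
      finally show ?thesis .
    qed
    have i1: "infdist (x k) (C ((j + 1) mod m)) \<le> M" for k
    proof -
      have "infdist (x k) (C ((j + 1) mod m)) \<le> dist (x k) (f k ((j + 1) mod m))"
        by (rule infdist_le) (use f(1) jp in \<open>auto simp: prod_sets_def\<close>)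
      also have "\<dots> \<le> ?D (f k)" unfolding x_def dist_norm by (rule term_le_cyc[OF j])
      finally show ?thesis using f(2)[of k] by linarith
    qed
    have i2: "infdist (x k) (C ((j + m - 1) mod m)) \<le> M" for k
    proof -
      have "infdist (x k) (C ((j + m - 1) mod m)) \<le> dist (x k) (f k ((j + m - 1) mod m))"
        by (rule infdist_le) (use f(1) jm in \<open>auto simp: prod_sets_def\<close>)
      also have "\<dots> = norm (f k ((j + m - 1) mod m) - f k (((j + m - 1) mod m + 1) mod m))"
        unfolding x_def dist_norm jm2 by (simp add: norm_minus_commute)
      also have "\<dots> \<le> ?D (f k)" by (rule term_le_cyc[OF jm])
      finally show ?thesis using f(2)[of k] by linarith
    qed
    from assms(5) nb have H: "\<forall>j<m. \<not> bounded (C j) \<longrightarrow>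
            (\<forall>x :: nat \<Rightarrow> 'a. (\<forall>k. x k \<in> C j) \<longrightarrow>
               filterlim (\<lambda>k. norm (x k)) at_top sequentially \<longrightarrow>
               filterlim (\<lambda>k. infdist (x k) (C ((j + m - 1) mod m))) at_top sequentially \<or>
               filterlim (\<lambda>k. infdist (x k) (C ((j + 1) mod m))) at_top sequentially)"
      by fast
    have "filterlim (\<lambda>k. infdist (x k) (C ((j + m - 1) mod m))) at_top sequentially \<or>
          filterlim (\<lambda>k. infdist (x k) (C ((j + 1) mod m))) at_top sequentially"
      using H j unb xC lim by blast
    then show False using not_tendsto_bounded[of "\<lambda>k. infdist (x k) (C ((j + 1) mod m))" M, OF i1]
         not_tendsto_bounded[of "\<lambda>k. infdist (x k) (C ((j + m - 1) mod m))" M, OF i2] by blast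
  qed
  then have "\<forall>j. \<exists>R. j < m \<longrightarrow> (\<forall>a\<in>?P. ?D a \<le> M \<longrightarrow> norm (a j) \<le> R)" by blast
  from choice[OF this] obtain R where R0: "\<forall>j. j < m \<longrightarrow> (\<forall>a\<in>?P. ?D a \<le> M \<longrightarrow> norm (a j) \<le> R j)"
    by blast
  have R: "\<And>j a. j < m \<Longrightarrow> a \<in> ?P \<Longrightarrow> ?D a \<le> M \<Longrightarrow> norm (a j) \<le> R j"
    using R0 by blast
  define S where "S i = (if i < m then C i \<inter> cball 0 (R i) else {0})" for i
  define K where "K = PiE UNIV S"
  define rs where "rs b = (\<lambda>i. if i < m then b i else 0)" for b :: "nat \<Rightarrow> 'a"
  have rsD: "?D (rs b) = ?D b" for b by (rule cyc_len_cong[OF m0]) (simp add: rs_def)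
  have rsK: "rs b \<in> K" if "b \<in> ?P" "?D b \<le> M" for b
  proof -
    have "rs b i \<in> S i" for i
    proof (cases "i < m")
      case True
      have "b i \<in> C i" using that(1) True unfolding prod_sets_def by blast
      moreover have "norm (b i) \<le> R i" by (rule R[OF True that])
      ultimately show ?thesis using True unfolding S_def rs_def by simp
    next
      case False
      then show ?thesis unfolding S_def rs_def by simp
    qed
    then show ?thesis unfolding K_def by (simp add: PiE_iff)
  qed
  have Kne: "K \<noteq> {}" using rsK[OF a0P] M_def by blast
  have compS: "compact (S i)" for i
    unfolding S_def using closed_Int_compact[OF assms(3) compact_cball] by simp
  have "compactin (product_topology (\<lambda>_. euclidean) UNIV) K"
    unfolding K_def by (intro iffD2[OF compactin_PiE] disjI2 ballI) (simp only: compactin_euclidean_iff compS)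
  then have compK: "compact K" by (metis compactin_euclidean_iff euclidean_product_topology)
  have cont: "continuous_on K ?D"
    unfolding cyc_len_def by (intro continuous_on_sum continuous_on_norm continuous_on_diff coord_cont)
  obtain a where aK: "a \<in> K" and amin: "\<And>y. y \<in> K \<Longrightarrow> ?D a \<le> ?D y"
    using continuous_attains_inf[OF compK Kne cont] by blast
  have aP: "a \<in> ?P" using aK unfolding K_def S_def prod_sets_def by (auto simp: PiE_iff) (metis IntD1)
  have "?D a \<le> ?D b" if "b \<in> ?P" for b
  proof (cases "?D b \<le> M")
    case True
    then show ?thesis using amin[OF rsK[OF that True]] rsD by simp
  next
    case False
    have "?D a \<le> ?D (rs a0)" using amin rsK[OF a0P] by (simp add: M_def)
    then show ?thesis using False rsD by (simp add: M_def)
  qed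
  moreover have "bdd_below (?D ` ?P)" by (rule bdd_belowI[of _ 0]) (auto simp: cyc_len_nonneg)
  ultimately have "?D a = (INF b\<in>?P. ?D b)"
    using aP by (intro antisym cINF_greatest cINF_lower) auto
  then show ?thesis using aP by blast
qed

end
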